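(* Let $Q$ be a finite quiver with $kQ$ of finite GK-dimension. On the set of cyclic vertices of $Q$, define $u\preceq v$ if $u=v$ or there is an arrow $u\to v$ in $E_Q$. Then $\preceq$ is a partial order.
   Context: A vertex is cyclic if it lies on some cycle; when $kQ$ has finite GK-dimension (equivalently, no vertex lies on two simple cycles with distinct underlying subquivers) each cyclic vertex lies on a unique simple cycle. The Ext-quiver $E_Q$ has the cyclic vertices as vertices, and for distinct cyclic vertices $v,w$ lying on simple cycles of lengths $n,m$, one arrow $v\to w$ iff there is a path in $Q$ from $v$ to $w$ whose length is a positive multiple of $nm$. *)

theory Defs
  imports Main
begin

record ('v, 'a) quiver =
  verts :: "'v set"
  arrs  :: "'a set"
  src   :: "'a \<Rightarrow> 'v"
  tgt   :: "'a \<Rightarrow> 'v"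

definition finite_quiver :: "('v, 'a) quiver \<Rightarrow> bool" where
  "finite_quiver Q \<longleftrightarrow> finite (verts Q) \<and> finite (arrs Q) \<and>
     (\<forall>a \<in> arrs Q. src Q a \<in> verts Q \<and> tgt Q a \<in> verts Q)"

definition is_path :: "('v, 'a) quiver \<Rightarrow> 'a list \<Rightarrow> bool" where
  "is_path Q p \<longleftrightarrow> p \<noteq> [] \<and> set p \<subseteq> arrs Q \<and>
     (\<forall>i. Suc i < length p \<longrightarrow> tgt Q (p ! i) = src Q (p ! Suc i))"

definition path_from_to :: "('v, 'a) quiver \<Rightarrow> 'v \<Rightarrow> 'v \<Rightarrow> 'a list \<Rightarrow> bool" where
  "path_from_to Q v w p \<longleftrightarrow> is_path Q p \<and> src Q (hd p) = v \<and> tgt Q (last p) = w"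

text \<open>With the standard generating subspace
  V spanned by the vertices (trivial paths) and arrows, V^n has as basis the paths of length
  at most n, so GKdim kQ = limsup log(dim V^n)/log n is finite iff the number of paths of
  length at most n is bounded by a polynomial in n.  (The trivial paths contribute the
  constant card (verts Q), which does not affect polynomial growth.)\<close>
definition finite_GKdim :: "('v, 'a) quiver \<Rightarrow> bool" where
  "finite_GKdim Q \<longleftrightarrow> (\<exists>C d :: nat. \<forall>n \<ge> 1.
      card (verts Q) + card {p. is_path Q p \<and> length p \<le> n} \<le> C * n ^ d)"

definition cyclic_vertex :: "('v, 'a) quiver \<Rightarrow> 'v \<Rightarrow> bool" where
  "cyclic_vertex Q v \<longleftrightarrow> v \<in> verts Q \<and> (\<exists>p. path_from_to Q v v p)"

definition cyclic_vertices :: "('v, 'a) quiver \<Rightarrow> 'v set" where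
  "cyclic_vertices Q = {v. cyclic_vertex Q v}"

definition simple_cycle :: "('v, 'a) quiver \<Rightarrow> 'a list \<Rightarrow> bool" where
  "simple_cycle Q c \<longleftrightarrow> is_path Q c \<and> tgt Q (last c) = src Q (hd c) \<and>
     distinct (map (src Q) c)"

definition on_simple_cycle_of_length :: "('v, 'a) quiver \<Rightarrow> 'v \<Rightarrow> nat \<Rightarrow> bool" where
  "on_simple_cycle_of_length Q v n \<longleftrightarrow>
     (\<exists>c. simple_cycle Q c \<and> length c = n \<and> v \<in> src Q ` set c)"

text \<open>Arrows of the Ext-quiver E_Q: for distinct cyclic vertices v, w lying on simple cycles
  of lengths n, m, an arrow v \<rightarrow> w iff there is a path from v to w of length a positive
  multiple of n*m.  (Under finite GK-dimension the simple cycle through a cyclic vertex is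
  unique, so the lengths n, m are determined.)\<close>
definition ext_arrow :: "('v, 'a) quiver \<Rightarrow> 'v \<Rightarrow> 'v \<Rightarrow> bool" where
  "ext_arrow Q v w \<longleftrightarrow> cyclic_vertex Q v \<and> cyclic_vertex Q w \<and> v \<noteq> w \<and>
     (\<exists>n m p k. on_simple_cycle_of_length Q v n \<and> on_simple_cycle_of_length Q w m \<and>
        path_from_to Q v w p \<and> k \<ge> 1 \<and> length p = k * (n * m))"

definition ext_preceq :: "('v, 'a) quiver \<Rightarrow> ('v \<times> 'v) set" where
  "ext_preceq Q = {(u, v). u \<in> cyclic_vertices Q \<and> v \<in> cyclic_vertices Q \<and>
                          (u = v \<or> ext_arrow Q u v)}"

end

theory Submission
  imports Defs
begin

fun walk :: "('v, 'a) quiver \<Rightarrow> 'v \<Rightarrow> 'a list \<Rightarrow> 'v \<Rightarrow> bool" where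
  "walk Q v [] w = (v = w)"
| "walk Q v (a # p) w = (a \<in> arrs Q \<and> src Q a = v \<and> walk Q (tgt Q a) p w)"

lemma is_path_Cons:
  assumes "p \<noteq> []"
  shows "is_path Q (a # p) \<longleftrightarrow> a \<in> arrs Q \<and> tgt Q a = src Q (hd p) \<and> is_path Q p"
proof
  assume h: "is_path Q (a # p)"
  have "tgt Q a = src Q (hd p)"
    using h assms unfolding is_path_def by (auto simp: hd_conv_nth)
  moreover have "\<forall>i. Suc i < length p \<longrightarrow> tgt Q (p ! i) = src Q (p ! Suc i)"
  proof (intro allI impI)
    fix i assume "Suc i < length p"
    then have "Suc (Suc i) < length (a # p)" by simp
    then show "tgt Q (p ! i) = src Q (p ! Suc i)"
      using h unfolding is_path_def by (metis nth_Cons_Suc)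
  qed
  ultimately show "a \<in> arrs Q \<and> tgt Q a = src Q (hd p) \<and> is_path Q p"
    using h assms unfolding is_path_def by auto
next
  assume h: "a \<in> arrs Q \<and> tgt Q a = src Q (hd p) \<and> is_path Q p"
  show "is_path Q (a # p)"
    unfolding is_path_def
  proof (intro conjI allI impI)
    fix i assume i: "Suc i < length (a # p)"
    show "tgt Q ((a # p) ! i) = src Q ((a # p) ! Suc i)"
    proof (cases i)
      case 0 then show ?thesis using h assms by (simp add: hd_conv_nth)
    next
      case (Suc j) then show ?thesis using h i unfolding is_path_def by simp
    qed
  qed (use h in \<open>auto simp: is_path_def\<close>)
qed

lemma pft_walk: "path_from_to Q v w p \<longleftrightarrow> p \<noteq> [] \<and> walk Q v p w"
proof (induction p arbitrary: v)
  case Nil then show ?case by (simp add: path_from_to_def is_path_def)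
next
  case (Cons a p)
  show ?case
  proof (cases "p = []")
    case True then show ?thesis by (auto simp: path_from_to_def is_path_def)
  next
    case False
    have "path_from_to Q v w (a # p) \<longleftrightarrow> a \<in> arrs Q \<and> src Q a = v \<and> path_from_to Q (tgt Q a) w p"
      using False by (auto simp: path_from_to_def is_path_Cons)
    then show ?thesis using Cons.IH False by simp
  qed
qed

lemma walk_append: "walk Q v (p @ q) x \<longleftrightarrow> (\<exists>w. walk Q v p w \<and> walk Q w q x)"
  by (induction p arbitrary: v) auto

lemma walk_unique: "walk Q v p w \<Longrightarrow> walk Q v p w' \<Longrightarrow> w = w'"
  by (induction p arbitrary: v) auto

lemma walk_concat: "(\<forall>x\<in>set xs. walk Q u x u) \<Longrightarrow> walk Q u (concat xs) u"
  by (induction xs) (auto simp: walk_append)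

lemma take_concat_rep:
  "t \<le> N \<Longrightarrow> take (length x * t) (concat (replicate N x)) = concat (replicate t x)"
proof (induction t arbitrary: N)
  case 0 then show ?case by simp
next
  case (Suc t)
  then obtain N' where N: "N = Suc N'" "t \<le> N'" by (cases N) auto
  show ?case using Suc.IH[OF N(2)] N by (simp add: take_append)
qed

lemma rotate_cycle:
  assumes "on_simple_cycle_of_length Q u n"
  shows "\<exists>c'. walk Q u c' u \<and> length c' = n"
proof -
  obtain c where c: "simple_cycle Q c" "length c = n" "u \<in> src Q ` set c"
    using assms unfolding on_simple_cycle_of_length_def by blast
  let ?s = "src Q (hd c)"
  have "path_from_to Q ?s ?s c" using c(1) unfolding simple_cycle_def path_from_to_def by auto
  then have w: "walk Q ?s c ?s" by (simp add: pft_walk)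
  obtain a where a: "a \<in> set c" "src Q a = u" using c(3) by auto
  obtain c1 c2 where cc: "c = c1 @ a # c2" using split_list[OF a(1)] by blast
  obtain x where x: "walk Q ?s c1 x" "walk Q x (a # c2) ?s" using w cc walk_append by metis
  then have "x = u" using a by simp
  then have "walk Q u ((a # c2) @ c1) u" using x walk_append by metis
  moreover have "length ((a # c2) @ c1) = n" using c(2) cc by simp
  ultimately show ?thesis by blast
qed

lemma sq_le_pow: "4 \<le> j \<Longrightarrow> j * j \<le> (2::nat) ^ j"
proof (induction j rule: dec_induct)
  case base then show ?case by simp
next
  case (step j)
  have "Suc j * Suc j = j * j + (2 * j + 1)" by simp
  also have "2 * j + 1 \<le> j * j"
  proof -
    have "3 * j \<le> j * j" using step(1) by (intro mult_right_mono) auto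
    then show ?thesis using step(1) by linarith
  qed
  then have "j * j + (2 * j + 1) \<le> j * j + j * j" by simp
  also have "\<dots> \<le> 2 ^ j + 2 ^ j" using step(3) by simp
  finally show ?case by simp
qed

lemma growth: "\<exists>k\<ge>1. C * (k * L) ^ d < (2::nat) ^ k"
proof -
  define B where "B = C * L ^ d"
  define j where "j = B + d + 4"
  define k where "k = (2::nat) ^ j"
  have "B + j * d \<le> j * j"
  proof -
    have "j * j = j * (B + d + 4)" by (simp add: j_def)
    also have "\<dots> = j * B + j * d + 4 * j" by (simp add: algebra_simps)
    finally show ?thesis using j_def by simp
  qed
  also have "\<dots> \<le> 2 ^ j" using sq_le_pow[of j] j_def by simp
  finally have bj: "B + j * d \<le> k" by (simp add: k_def)
  have "C * (k * L) ^ d = B * 2 ^ (j * d)"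
    by (simp add: B_def k_def power_mult_distrib power_mult[symmetric] mult.commute)
  also have "\<dots> < 2 ^ B * 2 ^ (j * d)" using less_exp[of B] by simp
  also have "\<dots> = 2 ^ (B + j * d)" by (simp add: power_add)
  also have "\<dots> \<le> 2 ^ k" using bj by (intro power_increasing) auto
  finally show ?thesis using k_def by (intro exI[of _ k]) auto
qed


lemma concat_choice_inj:
  assumes "length X = length Y" "X \<noteq> Y"
  shows "length bs = length bs' \<Longrightarrow>
    concat (map (\<lambda>b. if b then X else Y) bs) = concat (map (\<lambda>b. if b then X else Y) bs') \<Longrightarrow> bs = bs'"
proof (induction bs arbitrary: bs')
  case Nil then show ?case by simp
next
  case (Cons b r)
  then obtain b' r' where bs': "bs' = b' # r'" by (cases bs') auto
  have len: "length (if b then X else Y) = length (if b' then X else Y)" using assms by simp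
  from Cons.prems have "(if b then X else Y) @ concat (map (\<lambda>b. if b then X else Y) r) =
     (if b' then X else Y) @ concat (map (\<lambda>b. if b then X else Y) r')" by (simp add: bs')
  then have e: "(if b then X else Y) = (if b' then X else Y)"
     "concat (map (\<lambda>b. if b then X else Y) r) = concat (map (\<lambda>b. if b then X else Y) r')"
    using append_eq_append_conv[OF disjI1[OF len]] by auto
  have "b = b'" using e(1) assms(2) by (cases b; cases b') auto
  moreover have "r = r'" using Cons.IH[OF _ e(2)] Cons.prems bs' by simp
  ultimately show ?case using bs' by simp
qed

lemma length_concat_choice:
  assumes "length X = L" "length Y = L"
  shows "length (concat (map (\<lambda>b. if b then X else Y) bs)) = length bs * L"
  using assms by (induction bs) auto

lemma not_GK:
  assumes fq: "finite_quiver Q" and gk: "finite_GKdim Q"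
    and wX: "walk Q u X u" and wY: "walk Q u Y u" and ne: "X \<noteq> Y"
    and lX: "length X = L" and lY: "length Y = L" and L1: "L \<ge> 1"
  shows False
proof -
  obtain C d :: nat where Cd: "\<forall>n\<ge>1. card (verts Q) + card {p. is_path Q p \<and> length p \<le> n} \<le> C * n ^ d"
    using gk unfolding finite_GKdim_def by blast
  obtain k where k: "k \<ge> 1" "C * (k * L) ^ d < 2 ^ k" using growth by blast
  define f where "f = (\<lambda>bs. concat (map (\<lambda>b. if b then X else Y) bs))"
  define B where "B = {bs :: bool list. set bs \<subseteq> UNIV \<and> length bs = k}"
  define P where "P = {p. is_path Q p \<and> length p \<le> k * L}"
  have cB: "card B = 2 ^ k" unfolding B_def by (subst card_lists_length_eq) auto
  have inj: "inj_on f B"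
    unfolding inj_on_def B_def f_def using concat_choice_inj[of X Y] ne lX lY by auto
  have wf: "walk Q u (f bs) u" for bs
    unfolding f_def using wX wY by (intro walk_concat) auto
  have sub: "f ` B \<subseteq> P"
  proof
    fix p assume "p \<in> f ` B"
    then obtain bs where bs: "bs \<in> B" "p = f bs" by blast
    have lp: "length p = k * L" using bs length_concat_choice[OF lX lY] unfolding B_def f_def by simp
    then have "p \<noteq> []" using k(1) L1 by (cases p) auto
    then have "path_from_to Q u u p" using wf bs(2) pft_walk by metis
    then show "p \<in> P" using lp unfolding P_def path_from_to_def by simp
  qed
  have finP: "finite P"
  proof (rule finite_subset)
    show "P \<subseteq> {xs. set xs \<subseteq> arrs Q \<and> length xs \<le> k * L}" unfolding P_def is_path_def by auto
    show "finite {xs. set xs \<subseteq> arrs Q \<and> length xs \<le> k * L}"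
      using fq unfolding finite_quiver_def by (intro finite_lists_length_le) auto
  qed
  have "2 ^ k = card (f ` B)" using cB card_image[OF inj] by simp
  also have "\<dots> \<le> card P" using card_mono[OF finP sub] .
  also have "\<dots> \<le> C * (k * L) ^ d" using Cd[rule_format, of "k * L"] k(1) L1 unfolding P_def
    by (simp add: one_le_mult_iff)
  finally show False using k(2) by simp
qed

lemma len_rep: "length (concat (replicate t x)) = t * length x"
  by (induction t) auto

lemma walk_rep: "walk Q u x u \<Longrightarrow> walk Q u (concat (replicate t x)) u"
  by (intro walk_concat) auto

lemma osc_pos:
  assumes "path_from_to Q v w p" "length p = k * (n * m)"
  shows "n \<ge> 1" "m \<ge> 1" "k \<ge> 1"
  using assms by (auto simp: path_from_to_def is_path_def) (metis mult_is_0 le_zero_eq not_less_eq_eq length_0_conv)+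

lemma no_two_way:
  assumes fq: "finite_quiver Q" and gk: "finite_GKdim Q"
    and a1: "ext_arrow Q u v" and a2: "ext_arrow Q v u"
  shows False
proof -
  obtain n m p k where h: "on_simple_cycle_of_length Q u n" "path_from_to Q u v p"
      "length p = k * (n * m)" and uv: "u \<noteq> v"
    using a1 unfolding ext_arrow_def by blast
  obtain q where q: "path_from_to Q v u q" using a2 unfolding ext_arrow_def by blast
  obtain cu where cu: "walk Q u cu u" "length cu = n" using rotate_cycle[OF h(1)] by blast
  have n1: "n \<ge> 1" using osc_pos[OF h(2,3)] by simp
  define w where "w = p @ q"
  have wp: "walk Q u p v" "walk Q v q u" using h(2) q pft_walk by metis+
  have ww: "walk Q u w u" unfolding w_def using wp walk_append by metis
  have lw: "length w \<ge> 1" using q unfolding w_def path_from_to_def is_path_def by (cases q) auto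
  define X where "X = concat (replicate (length w) cu)"
  define Y where "Y = concat (replicate n w)"
  show False
  proof (cases "X = Y")
    case False
    show False
      by (rule not_GK[OF fq gk _ _ False, of u "n * length w"])
        (use n1 lw in \<open>auto simp: X_def Y_def len_rep cu(2) walk_rep cu(1) ww Suc_le_eq\<close>)
  next
    case True
    obtain n' where n': "n = Suc n'" using n1 by (cases n) auto
    have "take (length p) Y = p" unfolding Y_def w_def n' by simp
    moreover have "k * m \<le> length w"
    proof -
      have "k * m \<le> n * (k * m)" using n1 by simp
      also have "\<dots> = length p" using h(3) by simp
      finally show ?thesis unfolding w_def by simp
    qed
    then have "take (length p) X = concat (replicate (k * m) cu)"
      unfolding X_def using take_concat_rep[of "k * m" "length w" cu] h(3) cu(2)
      by (simp add: mult.assoc mult.left_commute)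
    ultimately have "p = concat (replicate (k * m) cu)" using True by simp
    then have "walk Q u p u" using walk_rep[OF cu(1)] by simp
    then show False using walk_unique wp(1) uv by metis
  qed
qed

theorem proposition7p1:
  fixes Q :: "('v, 'a) quiver"
  assumes "finite_quiver Q"
    and "finite_GKdim Q"
  shows "partial_order_on (cyclic_vertices Q) (ext_preceq Q)"
  unfolding partial_order_on_def preorder_on_def
proof (intro conjI)
  show "ext_preceq Q \<subseteq> cyclic_vertices Q \<times> cyclic_vertices Q"
    unfolding ext_preceq_def by auto
  show "refl_on (cyclic_vertices Q) (ext_preceq Q)"
    unfolding refl_on_def ext_preceq_def by auto
  show "antisym (ext_preceq Q)"
    unfolding antisym_def ext_preceq_def using no_two_way[OF assms] by auto
  show "trans (ext_preceq Q)"
  proof (rule transI)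
    fix u v w assume uv: "(u, v) \<in> ext_preceq Q" and vw: "(v, w) \<in> ext_preceq Q"
    have cu: "u \<in> cyclic_vertices Q" and cw: "w \<in> cyclic_vertices Q"
      using uv vw unfolding ext_preceq_def by auto
    show "(u, w) \<in> ext_preceq Q"
    proof (cases "u = v \<or> v = w \<or> u = w")
      case True then show ?thesis using uv vw cu unfolding ext_preceq_def by auto
    next
      case False
      then have a1: "ext_arrow Q u v" and a2: "ext_arrow Q v w"
        using uv vw unfolding ext_preceq_def by auto
      obtain n1 m1 p1 k1 where h1: "on_simple_cycle_of_length Q u n1"
          "path_from_to Q u v p1" "length p1 = k1 * (n1 * m1)"
        using a1 unfolding ext_arrow_def by blast
      obtain n2 m2 p2 k2 where h2: "on_simple_cycle_of_length Q w m2"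
          "path_from_to Q v w p2" "length p2 = k2 * (n2 * m2)"
        using a2 unfolding ext_arrow_def by blast
      obtain cu where cu': "walk Q u cu u" "length cu = n1" using rotate_cycle[OF h1(1)] by blast
      obtain cw where cw': "walk Q w cw w" "length cw = m2" using rotate_cycle[OF h2(1)] by blast
      have pos: "n1 \<ge> 1" "m1 \<ge> 1" "k1 \<ge> 1" "n2 \<ge> 1" "m2 \<ge> 1" "k2 \<ge> 1"
        using osc_pos[OF h1(2,3)] osc_pos[OF h2(2,3)] by auto
      define N where "N = n1 * m2"
      define r where "r = concat (replicate ((N - 1) * k1 * m1) cu) @ p1 @ p2 @
                           concat (replicate ((N - 1) * k2 * n2) cw)"
      have w1: "walk Q u p1 v" "walk Q v p2 w" using h1(2) h2(2) pft_walk by metis+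
      have wr: "walk Q u r w" unfolding r_def
        using walk_rep[OF cu'(1)] walk_rep[OF cw'(1)] w1 walk_append by metis
      have N1: "N \<ge> 1" using pos unfolding N_def by simp
      have "length r = (N - 1) * k1 * m1 * n1 + k1 * (n1 * m1) + k2 * (n2 * m2) + (N - 1) * k2 * n2 * m2"
        unfolding r_def using h1(3) h2(3) cu'(2) cw'(2) by (simp add: len_rep)
      also have "\<dots> = N * (k1 * n1 * m1) + N * (k2 * n2 * m2)"
        using N1 by (cases N) (auto simp: algebra_simps)
      also have "\<dots> = (k1 * n1 * m1 + k2 * n2 * m2) * (n1 * m2)"
        unfolding N_def by (simp add: algebra_simps)
      finally have lr: "length r = (k1 * n1 * m1 + k2 * n2 * m2) * (n1 * m2)" .
      have "r \<noteq> []" using h1(2) unfolding r_def path_from_to_def is_path_def by simp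
      then have "path_from_to Q u w r" using wr pft_walk by metis
      moreover have "k1 * n1 * m1 + k2 * n2 * m2 \<ge> 1" using pos by (simp add: Suc_le_eq)
      ultimately have "ext_arrow Q u w"
        unfolding ext_arrow_def using cu cw False h1(1) h2(1) lr
        unfolding cyclic_vertices_def by blast
      then show ?thesis using cu cw unfolding ext_preceq_def by auto
    qed
  qed
qed

end
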